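(* Let $T>0$, let $u_0:[0,1]\to\mathbb{R}$ be continuous and $b:\mathbb{R}\to\mathbb{R}$ Lipschitz. For $n\in\mathbb{N}$ let $\{\theta_n(t,x),\ (t,x)\in[0,T]\times[0,1]\}$ be stochastic processes with $\theta_n\in L^2([0,T]\times[0,1])$ a.s. Suppose that $X_n(t,x)=\int_0^t\int_0^1G_{t-s}(x,y)\theta_n(s,y)\,dy\,ds$ converges in law, as $n\to\infty$, in $\mathcal{C}([0,T]\times[0,1])$, to $X(t,x)=\int_0^t\int_0^1G_{t-s}(x,y)W(ds,dy)$, where $W$ is a Brownian sheet on $[0,T]\times[0,1]$. Then the mild solutions $U_n$ of $\partial_tU_n-\partial_{xx}U_n=b(U_n)+\theta_n$ converge in law, in $\mathcal{C}([0,T]\times[0,1])$, to the mild solution $U$ of $\partial_tU-\partial_{xx}U=b(U)+\dot W$, both with initial condition $u_0$ and Dirichlet boundary conditions.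
   Context: $G_t(x,y)=2\sum_{k\ge1}\sin(k\pi x)\sin(k\pi y)e^{-k^2\pi^2 t}$ is the Green function of the heat equation on $[0,1]$ with Dirichlet boundary conditions. The mild solution $U$ is the unique continuous process adapted to the (completed) natural filtration of $W$ with, a.s. for all $(t,x)$, $U(t,x)=\int_0^1G_t(x,y)u_0(y)dy+\int_0^t\int_0^1G_{t-s}(x,y)b(U(s,y))\,dy\,ds+\int_0^t\int_0^1G_{t-s}(x,y)W(ds,dy)$ (Wiener integral); $U_n$ is the unique a.s. continuous process with $U_n(t,x)=\int_0^1G_t(x,y)u_0(y)dy+\int_0^t\int_0^1G_{t-s}(x,y)b(U_n(s,y))\,dy\,ds+\int_0^t\int_0^1G_{t-s}(x,y)\theta_n(s,y)\,dy\,ds$. *)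

theory Defs
  imports "HOL-Probability.Probability"
begin

definition rect :: "real \<Rightarrow> (real \<times> real) set" where
  "rect T = {0..T} \<times> {0..1}"

definition heatG :: "real \<Rightarrow> real \<Rightarrow> real \<Rightarrow> real" where
  "heatG t x y = 2 * (\<Sum>k. sin (real (Suc k) * pi * x) * sin (real (Suc k) * pi * y)
                           * exp (- (real (Suc k))\<^sup>2 * pi\<^sup>2 * t))"

text \<open>Heat semigroup applied to the initial datum; at t = 0 it is the identity
 (convention: the series defining the kernel does not converge at t = 0).\<close>
definition heat_sg :: "(real \<Rightarrow> real) \<Rightarrow> real \<Rightarrow> real \<Rightarrow> real" where
  "heat_sg u0 t x = (if t = 0 then u0 x
                     else set_lebesgue_integral lborel {0..1} (\<lambda>y. heatG t x y * u0 y))"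

definition heat_conv :: "(real \<times> real \<Rightarrow> real) \<Rightarrow> real \<times> real \<Rightarrow> real" where
  "heat_conv h p = (case p of (t, x) \<Rightarrow>
     set_lebesgue_integral lborel {0..t} (\<lambda>s.
       set_lebesgue_integral lborel {0..1} (\<lambda>y. heatG (t - s) x y * h (s, y))))"

definition centered_gaussian :: "'b measure \<Rightarrow> ('b \<Rightarrow> real) \<Rightarrow> real \<Rightarrow> bool" where
  "centered_gaussian N Z v \<longleftrightarrow>
     (v > 0 \<and> distributed N lborel Z (normal_density 0 (sqrt v))) \<or>
     (v = 0 \<and> Z \<in> borel_measurable N \<and> (AE \<omega> in N. Z \<omega> = 0))"

definition brownian_sheet :: "'b measure \<Rightarrow> real \<Rightarrow> ('b \<Rightarrow> real \<times> real \<Rightarrow> real) \<Rightarrow> bool" where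
  "brownian_sheet N T W \<longleftrightarrow>
     (\<forall>p\<in>rect T. (\<lambda>\<omega>. W \<omega> p) \<in> borel_measurable N) \<and>
     (\<forall>P (c :: real \<times> real \<Rightarrow> real). finite P \<and> P \<subseteq> rect T \<longrightarrow>
        centered_gaussian N (\<lambda>\<omega>. \<Sum>p\<in>P. c p * W \<omega> p)
          (\<Sum>p\<in>P. \<Sum>q\<in>P. c p * c q * min (fst p) (fst q) * min (snd p) (snd q))) \<and>
     (AE \<omega> in N. continuous_on (rect T) (W \<omega>))"

definition step_fun :: "(real \<times> real \<times> real \<times> real \<times> real) list \<Rightarrow> real \<times> real \<Rightarrow> real" where
  "step_fun R p = sum_list (map (\<lambda>(\<alpha>, a, b, c, d). \<alpha> * indicator ({a<..b} \<times> {c<..d}) p) R)"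

definition step_ok :: "real \<Rightarrow> (real \<times> real \<times> real \<times> real \<times> real) list \<Rightarrow> bool" where
  "step_ok T R \<longleftrightarrow> (\<forall>(\<alpha>, a, b, c, d)\<in>set R. 0 \<le> a \<and> a \<le> b \<and> b \<le> T \<and> 0 \<le> c \<and> c \<le> d \<and> d \<le> 1)"

text \<open>Wiener integral of a step function: W((a,b] x (c,d]) is the rectangular increment.\<close>
definition step_wiener :: "('b \<Rightarrow> real \<times> real \<Rightarrow> real) \<Rightarrow> (real \<times> real \<times> real \<times> real \<times> real) list
                           \<Rightarrow> 'b \<Rightarrow> real" where
  "step_wiener W R \<omega> = sum_list (map (\<lambda>(\<alpha>, a, b, c, d).
      \<alpha> * (W \<omega> (b, d) - W \<omega> (a, d) - W \<omega> (b, c) + W \<omega> (a, c))) R)"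

definition wiener_integral :: "'b measure \<Rightarrow> real \<Rightarrow> ('b \<Rightarrow> real \<times> real \<Rightarrow> real)
                                \<Rightarrow> (real \<times> real \<Rightarrow> real) \<Rightarrow> ('b \<Rightarrow> real) \<Rightarrow> bool" where
  "wiener_integral N T W f Y \<longleftrightarrow>
     f \<in> borel_measurable lborel \<and> Y \<in> borel_measurable N \<and>
     (\<exists>R :: nat \<Rightarrow> (real \<times> real \<times> real \<times> real \<times> real) list.
        (\<forall>k. step_ok T (R k)) \<and>
        (\<lambda>k. \<integral>\<^sup>+ p. ennreal (indicator (rect T) p * (f p - step_fun (R k) p)\<^sup>2) \<partial>lborel)
            \<longlonglongrightarrow> 0 \<and>
        (\<lambda>k. \<integral>\<^sup>+ \<omega>. ennreal ((Y \<omega> - step_wiener W (R k) \<omega>)\<^sup>2) \<partial>N) \<longlonglongrightarrow> 0)"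

definition natural_filtration :: "'b measure \<Rightarrow> ('b \<Rightarrow> real \<times> real \<Rightarrow> real) \<Rightarrow> real \<Rightarrow> 'b set set" where
  "natural_filtration N W t = sigma_sets (space N)
     {(\<lambda>\<omega>. W \<omega> (s, y)) -` A \<inter> space N | s y A. 0 \<le> s \<and> s \<le> t \<and> 0 \<le> y \<and> y \<le> 1 \<and> A \<in> sets borel}"

definition completed_natural_filtration :: "'b measure \<Rightarrow> ('b \<Rightarrow> real \<times> real \<Rightarrow> real) \<Rightarrow> real \<Rightarrow> 'b set set" where
  "completed_natural_filtration N W t =
     {A. A \<subseteq> space N \<and> (\<exists>S\<in>natural_filtration N W t. \<exists>Z\<in>null_sets N. (A - S) \<union> (S - A) \<subseteq> Z)}"

definition adapted_to :: "'b measure \<Rightarrow> real \<Rightarrow> ('b \<Rightarrow> real \<times> real \<Rightarrow> real) \<Rightarrow> ('b \<Rightarrow> real \<times> real \<Rightarrow> real) \<Rightarrow> bool" where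
  "adapted_to N T W U \<longleftrightarrow>
     (\<forall>t x A. (t, x) \<in> rect T \<and> A \<in> sets borel \<longrightarrow>
        (\<lambda>\<omega>. U \<omega> (t, x)) -` A \<inter> space N \<in> completed_natural_filtration N W t)"

text \<open>F is a bounded continuous functional on C([0,T] x [0,1]) with the sup norm
 (values of F outside C([0,T] x [0,1]) are irrelevant).\<close>
definition bdd_cont_functional :: "real \<Rightarrow> ((real \<times> real \<Rightarrow> real) \<Rightarrow> real) \<Rightarrow> bool" where
  "bdd_cont_functional T F \<longleftrightarrow>
     (\<exists>C. \<forall>f. continuous_on (rect T) f \<longrightarrow> \<bar>F f\<bar> \<le> C) \<and>
     (\<forall>f. continuous_on (rect T) f \<longrightarrow>
        (\<forall>\<epsilon>>0. \<exists>\<delta>>0. \<forall>g. continuous_on (rect T) g \<and> (\<forall>p\<in>rect T. \<bar>f p - g p\<bar> < \<delta>)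
              \<longrightarrow> \<bar>F f - F g\<bar> < \<epsilon>))"

text \<open>Expectations are taken w.r.t. the completed measures, so that F applied to
 almost surely continuous paths is measurable.\<close>
definition conv_in_law_C :: "real \<Rightarrow> (nat \<Rightarrow> 'a measure) \<Rightarrow> (nat \<Rightarrow> 'a \<Rightarrow> real \<times> real \<Rightarrow> real)
                             \<Rightarrow> 'b measure \<Rightarrow> ('b \<Rightarrow> real \<times> real \<Rightarrow> real) \<Rightarrow> bool" where
  "conv_in_law_C T M Xs N X \<longleftrightarrow>
     (\<forall>F. bdd_cont_functional T F \<longrightarrow>
        (\<lambda>n. integral\<^sup>L (completion (M n)) (\<lambda>\<omega>. F (Xs n \<omega>)))
          \<longlonglongrightarrow> integral\<^sup>L (completion N) (\<lambda>\<omega>. F (X \<omega>)))"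

end

theory Submission
  imports Defs
begin

definition ek :: "nat \<Rightarrow> real \<Rightarrow> real" where
  "ek k r = exp (- (real (Suc k))\<^sup>2 * pi\<^sup>2 * r)"

definition cK :: "real \<Rightarrow> real" where
  "cK r = 2 * (\<Sum>k. ek k r)"

lemma sin_sin_le: fixes a b e :: real assumes "0 \<le> e" shows "\<bar>sin a * sin b * e\<bar> \<le> e"
proof -
  have "\<bar>sin a * sin b\<bar> \<le> 1" proof -
    have "\<bar>sin a * sin b\<bar> = \<bar>sin a\<bar> * \<bar>sin b\<bar>" by (rule abs_mult)
    also have "\<dots> \<le> 1 * 1" by (rule mult_mono) (auto simp: abs_sin_le_one)
    finally show ?thesis by simp
  qed
  thus ?thesis using assms by (simp add: abs_mult mult_left_le_one_le mult_right_le_one_le)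
qed

lemma ek_pos: "0 < ek k r" by (simp add: ek_def)

lemma ek_le_geom:
  assumes "r > 0" shows "ek k r \<le> exp (- r) ^ Suc k"
proof -
  have pi1: "1 \<le> pi\<^sup>2" using pi_gt3 by (simp add: power2_eq_square) (smt (verit) mult_less_cancel_left1 pi_gt_zero)
  have "real (Suc k) \<le> (real (Suc k))\<^sup>2" by (simp add: power2_eq_square)
  also have "\<dots> \<le> (real (Suc k))\<^sup>2 * pi\<^sup>2" using pi1 by simp
  finally have "real (Suc k) * r \<le> (real (Suc k))\<^sup>2 * pi\<^sup>2 * r"
    using assms by (simp add: mult_right_mono)
  hence "ek k r \<le> exp (- (real (Suc k) * r))" unfolding ek_def by simp
  also have "\<dots> = exp (- r) ^ Suc k"
    by (metis exp_of_nat_mult mult_minus_right)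
  finally show ?thesis .
qed

lemma ek_summable: assumes "r > 0" shows "summable (\<lambda>k. ek k r)"
proof (rule summable_comparison_test')
  show "summable (\<lambda>k. exp (- r) ^ Suc k)"
    using assms by (simp add: summable_geometric)
  show "norm (ek k r) \<le> exp (- r) ^ Suc k" for k
    using ek_le_geom[OF assms] ek_pos[of k r] by simp
qed

lemma heat_term_summable:
  assumes "r > 0"
  shows "summable (\<lambda>k. sin (real (Suc k) * pi * x) * sin (real (Suc k) * pi * y)
                           * exp (- (real (Suc k))\<^sup>2 * pi\<^sup>2 * r))"
proof (rule summable_comparison_test')
  show "summable (\<lambda>k. ek k r)" by (rule ek_summable[OF assms])
  show "norm (sin (real (Suc k) * pi * x) * sin (real (Suc k) * pi * y)
                           * exp (- (real (Suc k))\<^sup>2 * pi\<^sup>2 * r)) \<le> ek k r" for k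
    unfolding ek_def real_norm_def by (rule sin_sin_le) simp
qed

lemma heatG_bound:
  assumes "r > 0" shows "\<bar>heatG r x y\<bar> \<le> cK r"
proof -
  let ?f = "\<lambda>k. sin (real (Suc k) * pi * x) * sin (real (Suc k) * pi * y)
                           * exp (- (real (Suc k))\<^sup>2 * pi\<^sup>2 * r)"
  have s: "summable ?f" by (rule heat_term_summable[OF assms])
  have le: "\<bar>?f k\<bar> \<le> ek k r" for k
    unfolding ek_def by (rule sin_sin_le) simp
  have "\<bar>suminf ?f\<bar> \<le> (\<Sum>k. \<bar>?f k\<bar>)"
    by (rule summable_rabs) (rule summable_comparison_test'[OF ek_summable[OF assms]], use le in auto)
  also have "\<dots> \<le> (\<Sum>k. ek k r)"
    by (rule suminf_le) (use le ek_summable[OF assms] in \<open>auto intro: summable_comparison_test'\<close>)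
  finally show ?thesis unfolding heatG_def cK_def by simp
qed

definition GN :: "nat \<Rightarrow> real \<Rightarrow> real \<Rightarrow> real \<Rightarrow> real" where
  "GN n r x y = 2 * (\<Sum>k<n. sin (real (Suc k) * pi * x) * sin (real (Suc k) * pi * y)
                           * exp (- (real (Suc k))\<^sup>2 * pi\<^sup>2 * r))"

lemma GN_tendsto: assumes "r > 0" shows "(\<lambda>n. GN n r x y) \<longlonglongrightarrow> heatG r x y"
  unfolding GN_def heatG_def
  by (intro tendsto_mult_left summable_LIMSEQ heat_term_summable[OF assms])

lemma J_meas:
  fixes h :: "real \<times> real \<Rightarrow> real"
  assumes h: "h \<in> borel_measurable borel"
  shows "(\<lambda>(s,y). indicator {0..<t} s * indicator {0..1} y * heatG (t - s) x y * h (s,y))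
           \<in> borel_measurable (lborel \<Otimes>\<^sub>M lborel)"
proof -
  have [measurable]: "h \<in> borel_measurable (lborel \<Otimes>\<^sub>M lborel)" using h by (simp add: lborel_prod)
  have "(\<lambda>p. indicator {0..<t} (fst p) * indicator {0..1} (snd p) * heatG (t - fst p) x (snd p) * h p)
           \<in> borel_measurable (lborel \<Otimes>\<^sub>M lborel)"
  proof (rule borel_measurable_LIMSEQ_real)
    fix p :: "real \<times> real"
    show "(\<lambda>i. indicator {0..<t} (fst p) * indicator {0..1} (snd p) * GN i (t - fst p) x (snd p) * h p)
          \<longlonglongrightarrow> indicator {0..<t} (fst p) * indicator {0..1} (snd p) * heatG (t - fst p) x (snd p) * h p"
    proof (cases "fst p \<in> {0..<t}")
      case True
      hence "t - fst p > 0" by auto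
      thus ?thesis by (intro tendsto_intros GN_tendsto)
    qed simp
  next
    fix i
    show "(\<lambda>p. indicator {0..<t} (fst p) * indicator {0..1} (snd p) * GN i (t - fst p) x (snd p) * h p)
       \<in> borel_measurable (lborel \<Otimes>\<^sub>M lborel)"
      unfolding GN_def by measurable
  qed
  thus ?thesis by (simp add: case_prod_beta')
qed

definition kap :: "real \<Rightarrow> real" where
  "kap l = 2 * (\<Sum>k. 1 / ((real (Suc k))\<^sup>2 + l))"

lemma tele_bound: "1 / ((real (Suc k))\<^sup>2 + l) \<le> 2 * (1 / real (Suc k) - 1 / real (Suc (Suc k)))"
  if "l \<ge> 0" for l
proof -
  have "1 / ((real (Suc k))\<^sup>2 + l) \<le> 1 / (real (Suc k))\<^sup>2"
    using that by (intro divide_left_mono mult_pos_pos add_pos_nonneg) auto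
  also have "\<dots> \<le> 2 * (1 / real (Suc k) - 1 / real (Suc (Suc k)))"
  proof -
    have a: "(1::real) \<le> real (Suc k)" by simp
    have "2 * (1 / real (Suc k) - 1 / real (Suc (Suc k))) = 2 / (real (Suc k) * (real (Suc k) + 1))"
      by (simp add: field_simps)
    also have "1 / (real (Suc k))\<^sup>2 \<le> \<dots>"
      using a by (simp add: divide_simps power2_eq_square)
    finally show ?thesis by simp
  qed
  finally show ?thesis .
qed

lemma tele_sums: "(\<lambda>k. 2 * (1 / real (Suc k) - 1 / real (Suc (Suc k)))) sums 2"
proof -
  have "(\<lambda>n. 1 / real (Suc n)) \<longlonglongrightarrow> 0" by (rule LIMSEQ_inverse_real_of_nat[unfolded inverse_eq_divide])
  from sums_mult[OF telescope_sums'[OF this], of 2] show ?thesis by simp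
qed

lemma kap_summable: assumes "l \<ge> 0" shows "summable (\<lambda>k. 1 / ((real (Suc k))\<^sup>2 + l))"
proof (rule summable_comparison_test')
  show "summable (\<lambda>k. 2 * (1 / real (Suc k) - 1 / real (Suc (Suc k))))"
    by (rule sums_summable[OF tele_sums])
  show "norm (1 / ((real (Suc k))\<^sup>2 + l)) \<le> 2 * (1 / real (Suc k) - 1 / real (Suc (Suc k)))" for k
    using tele_bound[OF assms, of k] assms by (simp add: add_nonneg_nonneg)
qed

lemma kap_nonneg: assumes "l \<ge> 0" shows "0 \<le> kap l"
  unfolding kap_def using assms suminf_nonneg[OF kap_summable[OF assms]]
  by (simp add: add_nonneg_nonneg)

lemma kap_bound:
  assumes m: "m > 0" shows "kap (m\<^sup>2) \<le> 4 / m"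
proof -
  define f where "f n = 1 / (m + real n)" for n
  have f0: "f \<longlonglongrightarrow> 0" unfolding f_def
    by (intro tendsto_divide_0[OF tendsto_const] filterlim_at_top_imp_at_infinity filterlim_tendsto_add_at_top[OF tendsto_const filterlim_real_sequentially])
  have ts: "(\<lambda>n. 2 * (f n - f (Suc n))) sums (2 * (1 / m))"
    using sums_mult[OF telescope_sums'[OF f0], of 2] by (simp add: f_def)
  have le: "1 / ((real (Suc k))\<^sup>2 + m\<^sup>2) \<le> 2 * (f k - f (Suc k))" for k
  proof -
    define a where "a = m + real k"
    have a0: "0 < a" using m by (simp add: a_def)
    have X: "(real (Suc k))\<^sup>2 + m\<^sup>2 > 0" using m by (simp add: add_pos_nonneg)
    have sq: "(a + 1)\<^sup>2 \<le> 2 * ((real (Suc k))\<^sup>2 + m\<^sup>2)"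
    proof -
      have "(a + 1)\<^sup>2 = 2 * ((real (Suc k))\<^sup>2 + m\<^sup>2) - (real (Suc k) - m)\<^sup>2"
        by (simp add: a_def power2_eq_square algebra_simps)
      thus ?thesis by (smt (verit) zero_le_power2)
    qed
    have "1 / ((real (Suc k))\<^sup>2 + m\<^sup>2) \<le> 1 / ((a+1)\<^sup>2 / 2)"
      using sq a0 X by (intro divide_left_mono mult_pos_pos) auto
    also have "\<dots> = 2 / (a+1)\<^sup>2" by simp
    also have "\<dots> \<le> 2 / (a * (a+1))"
      using a0 by (intro divide_left_mono) (auto simp: power2_eq_square)
    also have "\<dots> = 2 * (f k - f (Suc k))"
      using a0 by (simp add: f_def a_def field_simps)
    finally show ?thesis .
  qed
  have "(\<Sum>k. 1 / ((real (Suc k))\<^sup>2 + m\<^sup>2)) \<le> (\<Sum>k. 2 * (f k - f (Suc k)))"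
    by (intro suminf_le le kap_summable sums_summable[OF ts]) simp
  also have "\<dots> = 2 / m" using sums_unique[OF ts] by simp
  finally show ?thesis unfolding kap_def by simp
qed

lemma pi_sq_ge1: "1 \<le> pi\<^sup>2"
  using pi_gt3 by (simp add: power2_eq_square) (smt (verit) mult_less_cancel_left1 pi_gt_zero)

lemma exp_term_integral:
  fixes a l t :: real
  assumes t: "0 \<le> t" and al: "0 < a + l"
  shows "(\<integral>\<^sup>+s. ennreal (indicator {0..t} s * (2 * exp (- a * (t - s)) * exp (l * s))) \<partial>lborel)
         \<le> ennreal (2 * exp (l * t) / (a + l))"
proof -
  define P where "P s = 2 / (a + l) * exp (- a * (t - s) + l * s)" for s
  have d: "(P has_vector_derivative (2 * exp (- a * (t - s)) * exp (l * s))) (at s within {0..t})" for s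
  proof -
    have "(P has_real_derivative (2 / (a + l) * (exp (- a * (t - s) + l * s) * (a + l)))) (at s)"
      unfolding P_def by (intro DERIV_cmult DERIV_fun_exp) (auto intro!: derivative_eq_intros)
    also have "2 / (a + l) * (exp (- a * (t - s) + l * s) * (a + l)) = 2 * exp (- a * (t - s)) * exp (l * s)"
    proof -
      have "exp (- a * (t - s) + l * s) = exp (- a * (t - s)) * exp (l * s)" by (rule exp_add)
      moreover have "2 / (a + l) * (E * (a + l)) = 2 * E" for E using al by simp
      ultimately show ?thesis by simp
    qed
    finally show ?thesis
      by (simp add: has_real_derivative_iff_has_vector_derivative[symmetric] has_field_derivative_at_within)
  qed
  have hi: "((\<lambda>s. 2 * exp (- a * (t - s)) * exp (l * s)) has_integral (P t - P 0)) {0..t}"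
    by (rule fundamental_theorem_of_calculus[OF t]) (rule d)
  have "(\<integral>\<^sup>+s. ennreal (indicator {0..t} s * (2 * exp (- a * (t - s)) * exp (l * s))) \<partial>lborel)
        = ennreal (P t - P 0)"
    by (rule nn_integral_has_integral_lebesgue[OF _ hi]) simp
  also have "P t - P 0 \<le> 2 * exp (l * t) / (a + l)"
    unfolding P_def using al by (simp add: divide_right_mono diff_divide_distrib)
  finally show ?thesis by (simp add: ennreal_leI)
qed

lemma cK_series:
  assumes "r > 0"
  shows "cK r * e = (\<Sum>k. 2 * ek k r * e)"
proof -
  have "(\<lambda>k. 2 * ek k r * e) sums (2 * (\<Sum>k. ek k r) * e)"
    using sums_mult2[OF sums_mult[OF summable_sums[OF ek_summable[OF assms]], of 2], of e] by simp
  thus ?thesis unfolding cK_def by (simp add: sums_iff)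
qed

lemma cK_nonneg: assumes "r > 0" shows "0 \<le> cK r"
  unfolding cK_def using suminf_nonneg[OF ek_summable[OF assms]] ek_pos by (simp add: less_imp_le)

lemma kernel_eq:
  "ennreal (indicator {0..<t} s * (cK (t - s) * exp (l * s)))
        = (\<Sum>k. ennreal (indicator {0..<t} s * (2 * exp (- (real (Suc k))\<^sup>2 * pi\<^sup>2 * (t - s)) * exp (l * s))))"
proof (cases "s \<in> {0..<t}")
  case True
  hence r: "t - s > 0" by auto
  have sm: "summable (\<lambda>k. 2 * ek k (t - s) * exp (l * s))"
    by (intro summable_mult2 summable_mult ek_summable[OF r])
  have "ennreal (cK (t - s) * exp (l * s)) = (\<Sum>k. ennreal (2 * ek k (t - s) * exp (l * s)))"
    unfolding cK_series[OF r] by (rule suminf_ennreal2[symmetric]) (use ek_pos in \<open>auto intro: sm less_imp_le\<close>)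
  thus ?thesis using True by (simp add: ek_def)
qed simp

lemma kernel_meas:
  "(\<lambda>s. ennreal (indicator {0..<t} s * (cK (t - s) * exp (l * s)))) \<in> borel_measurable lborel"
  unfolding kernel_eq by measurable

lemma nn_kernel:
  assumes t: "0 \<le> t" and l: "0 \<le> l"
  shows "(\<integral>\<^sup>+s. ennreal (indicator {0..<t} s * (cK (t - s) * exp (l * s))) \<partial>lborel)
         \<le> ennreal (exp (l * t) * kap l)"
proof -
  note eq = kernel_eq[of t _ l]
  have "(\<integral>\<^sup>+s. ennreal (indicator {0..<t} s * (cK (t - s) * exp (l * s))) \<partial>lborel)
      = (\<Sum>k. \<integral>\<^sup>+s. ennreal (indicator {0..<t} s * (2 * exp (- (real (Suc k))\<^sup>2 * pi\<^sup>2 * (t - s)) * exp (l * s))) \<partial>lborel)"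
    unfolding eq by (rule nn_integral_suminf) measurable
  also have "\<dots> \<le> (\<Sum>k. ennreal (2 * exp (l * t) / ((real (Suc k))\<^sup>2 + l)))"
  proof (intro suminf_le summableI)
    fix k
    define a where "a = (real (Suc k))\<^sup>2 * pi\<^sup>2"
    have a1: "(real (Suc k))\<^sup>2 \<le> a" unfolding a_def using pi_sq_ge1
      by (simp add: mult_le_cancel_left1)
    have al: "0 < a + l" using a1 l by (smt (verit) of_nat_0_less_iff zero_less_Suc zero_less_power)
    have "(\<integral>\<^sup>+s. ennreal (indicator {0..<t} s * (2 * exp (- (real (Suc k))\<^sup>2 * pi\<^sup>2 * (t - s)) * exp (l * s))) \<partial>lborel)
        \<le> (\<integral>\<^sup>+s. ennreal (indicator {0..t} s * (2 * exp (- a * (t - s)) * exp (l * s))) \<partial>lborel)"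
      by (intro nn_integral_mono ennreal_leI) (auto simp: a_def indicator_def)
    also have "\<dots> \<le> ennreal (2 * exp (l * t) / (a + l))"
      by (rule exp_term_integral[OF t al])
    also have "\<dots> \<le> ennreal (2 * exp (l * t) / ((real (Suc k))\<^sup>2 + l))"
      using a1 l al by (intro ennreal_leI divide_left_mono mult_pos_pos) (auto simp: add_pos_nonneg)
    finally show "(\<integral>\<^sup>+s. ennreal (indicator {0..<t} s * (2 * exp (- (real (Suc k))\<^sup>2 * pi\<^sup>2 * (t - s)) * exp (l * s))) \<partial>lborel)
        \<le> ennreal (2 * exp (l * t) / ((real (Suc k))\<^sup>2 + l))" .
  qed
  also have "\<dots> = ennreal (\<Sum>k. 2 * exp (l * t) / ((real (Suc k))\<^sup>2 + l))"
  proof (rule suminf_ennreal2)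
    show "summable (\<lambda>k. 2 * exp (l * t) / ((real (Suc k))\<^sup>2 + l))"
      using summable_mult[OF kap_summable[OF l], of "2 * exp (l * t)"] by simp
  qed (use l in \<open>auto simp: add_nonneg_nonneg\<close>)
  also have "(\<Sum>k. 2 * exp (l * t) / ((real (Suc k))\<^sup>2 + l)) = exp (l * t) * kap l"
    unfolding kap_def using suminf_mult[OF kap_summable[OF l], of "2 * exp (l * t)"] by simp
  finally show ?thesis .
qed

lemma nn_kernelB:
  assumes t: "0 \<le> t" and l: "0 \<le> l" and B: "0 \<le> B"
  shows "(\<integral>\<^sup>+s. ennreal (indicator {0..<t} s * (cK (t - s) * (B * exp (l * s)))) \<partial>lborel)
         \<le> ennreal (B * exp (l * t) * kap l)"
proof -
  have "(\<integral>\<^sup>+s. ennreal (indicator {0..<t} s * (cK (t - s) * (B * exp (l * s)))) \<partial>lborel)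
      = (\<integral>\<^sup>+s. ennreal B * ennreal (indicator {0..<t} s * (cK (t - s) * exp (l * s))) \<partial>lborel)"
  proof (rule nn_integral_cong)
    fix s :: real
    show "ennreal (indicator {0..<t} s * (cK (t - s) * (B * exp (l * s))))
        = ennreal B * ennreal (indicator {0..<t} s * (cK (t - s) * exp (l * s)))"
    proof (cases "s \<in> {0..<t}")
      case True
      hence "0 \<le> cK (t - s)" by (intro cK_nonneg) auto
      thus ?thesis using True B by (simp add: ennreal_mult[symmetric] mult_ac)
    qed simp
  qed
  also have "\<dots> = ennreal B * (\<integral>\<^sup>+s. ennreal (indicator {0..<t} s * (cK (t - s) * exp (l * s))) \<partial>lborel)"
    by (rule nn_integral_cmult[OF kernel_meas])
  also have "\<dots> \<le> ennreal B * ennreal (exp (l * t) * kap l)"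
    by (intro mult_left_mono nn_kernel[OF t l]) simp
  also have "\<dots> = ennreal (B * exp (l * t) * kap l)"
    using B by (simp add: ennreal_mult'[symmetric] mult_ac)
  finally show ?thesis .
qed

lemma abs_integral_le_nn:
  fixes f :: "'a \<Rightarrow> real"
  assumes "(\<integral>\<^sup>+x. ennreal \<bar>f x\<bar> \<partial>M) \<le> ennreal K" "0 \<le> K"
  shows "\<bar>integral\<^sup>L M f\<bar> \<le> K"
proof (cases "integrable M f")
  case True
  have "ennreal (norm (integral\<^sup>L M f)) \<le> (\<integral>\<^sup>+x. norm (f x) \<partial>M)"
    by (rule integral_norm_bound_ennreal[OF True])
  also have "\<dots> \<le> ennreal K" using assms(1) by simp
  finally show ?thesis using assms(2) by (simp add: ennreal_le_iff)
qed (simp add: not_integrable_integral_eq assms)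

definition Ig :: "real \<Rightarrow> real \<Rightarrow> (real \<times> real \<Rightarrow> real) \<Rightarrow> real \<Rightarrow> real" where
  "Ig t x g s = (\<integral>y. indicator {0..<t} s * indicator {0..1} y * heatG (t - s) x y * g (s,y) \<partial>lborel)"

lemma Ig_meas:
  assumes "g \<in> borel_measurable borel"
  shows "Ig t x g \<in> borel_measurable lborel"
  unfolding Ig_def
  using lborel.borel_measurable_lebesgue_integral[OF J_meas[OF assms, of t x]] by simp

lemma J_meas_y:
  assumes "g \<in> borel_measurable borel"
  shows "(\<lambda>y. indicator {0..<t} s * indicator {0..1} y * heatG (t - s) x y * g (s,y)) \<in> borel_measurable lborel"
  using measurable_Pair2[OF J_meas[OF assms, of t x], of s] by simp

lemma Ig_bound:
  fixes g :: "real \<times> real \<Rightarrow> real" and \<beta> :: "real \<Rightarrow> real" and s t x :: real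
  assumes g: "g \<in> borel_measurable borel"
    and bd: "\<And>s y. (s,y) \<in> rect t \<Longrightarrow> \<bar>g (s,y)\<bar> \<le> \<beta> s" and b0: "\<And>s. 0 \<le> \<beta> s"
  shows "\<bar>Ig t x g s\<bar> \<le> indicator {0..<t} s * (cK (t - s) * \<beta> s)"
    and "s \<in> {0..<t} \<Longrightarrow> integrable lborel (\<lambda>y. indicator {0..<t} s * indicator {0..1} y * heatG (t - s) x y * g (s,y))"
proof -
  have main: "(\<integral>\<^sup>+y. ennreal \<bar>indicator {0..<t} s * indicator {0..1} y * heatG (t - s) x y * g (s,y)\<bar> \<partial>lborel)
        \<le> ennreal (cK (t - s) * \<beta> s)" if s: "s \<in> {0..<t}"
  proof -
    have r: "t - s > 0" using s by auto
    have "(\<integral>\<^sup>+y. ennreal \<bar>indicator {0..<t} s * indicator {0..1} y * heatG (t - s) x y * g (s,y)\<bar> \<partial>lborel)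
        \<le> (\<integral>\<^sup>+(y::real). ennreal (cK (t - s) * \<beta> s * indicator {0..1} y) \<partial>lborel)"
    proof (rule nn_integral_mono)
      fix y
      show "ennreal \<bar>indicator {0..<t} s * indicator {0..1} y * heatG (t - s) x y * g (s,y)\<bar>
            \<le> ennreal (cK (t - s) * \<beta> s * indicator {0..1} y)"
      proof (cases "y \<in> {0..1}")
        case True
        hence inr: "(s,y) \<in> rect t" using s by (auto simp: rect_def)
        have "\<bar>heatG (t - s) x y * g (s,y)\<bar> \<le> cK (t - s) * \<beta> s"
          unfolding abs_mult
          by (intro mult_mono heatG_bound[OF r] bd[OF inr] cK_nonneg[OF r]) simp
        thus ?thesis using True s by (simp add: ennreal_leI mult.assoc)
      qed simp
    qed
    also have "\<dots> = (\<integral>\<^sup>+(y::real). ennreal (cK (t - s) * \<beta> s) * indicator {0..1} y \<partial>lborel)"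
      by (intro nn_integral_cong) (auto simp: indicator_def)
    also have "\<dots> = ennreal (cK (t - s) * \<beta> s)"
      by (subst nn_integral_cmult_indicator) auto
    finally show ?thesis .
  qed
  show "\<bar>Ig t x g s\<bar> \<le> indicator {0..<t} s * (cK (t - s) * \<beta> s)"
  proof (cases "s \<in> {0..<t}")
    case True
    have "\<bar>Ig t x g s\<bar> \<le> cK (t - s) * \<beta> s"
      unfolding Ig_def
      by (rule abs_integral_le_nn[OF main[OF True]]) (use True cK_nonneg b0 in \<open>auto intro: mult_nonneg_nonneg\<close>)
    thus ?thesis using True by simp
  qed (simp add: Ig_def)
  show "integrable lborel (\<lambda>y. indicator {0..<t} s * indicator {0..1} y * heatG (t - s) x y * g (s,y))"
    if s: "s \<in> {0..<t}"
  proof (rule integrableI_bounded[OF J_meas_y[OF g]])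
    show "(\<integral>\<^sup>+y. ennreal (norm (indicator {0..<t} s * indicator {0..1} y * heatG (t - s) x y * g (s,y))) \<partial>lborel) < \<infinity>"
      using main[OF s] by (simp add: le_less_trans)
  qed
qed

lemma Ig_diff:
  fixes g1 g2 :: "real \<times> real \<Rightarrow> real"
  assumes m1: "g1 \<in> borel_measurable borel" and m2: "g2 \<in> borel_measurable borel"
    and b1: "\<And>s y. (s,y) \<in> rect t \<Longrightarrow> \<bar>g1 (s,y)\<bar> \<le> M1" and b2: "\<And>s y. (s,y) \<in> rect t \<Longrightarrow> \<bar>g2 (s,y)\<bar> \<le> M2"
    and M1: "0 \<le> M1" and M2: "0 \<le> M2"
  shows "Ig t x g1 s - Ig t x g2 s = Ig t x (\<lambda>p. g1 p - g2 p) s"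
proof (cases "s \<in> {0..<t}")
  case True
  have i1: "integrable lborel (\<lambda>y. indicator {0..<t} s * indicator {0..1} y * heatG (t - s) x y * g1 (s,y))"
    by (rule Ig_bound(2)[OF m1 b1]) (use M1 True in auto)
  have i2: "integrable lborel (\<lambda>y. indicator {0..<t} s * indicator {0..1} y * heatG (t - s) x y * g2 (s,y))"
    by (rule Ig_bound(2)[OF m2 b2]) (use M2 True in auto)
  show ?thesis unfolding Ig_def
    by (subst Bochner_Integration.integral_diff[OF i1 i2, symmetric]) (simp add: algebra_simps)
qed (simp add: Ig_def)

lemma Ig_integrable:
  fixes g :: "real \<times> real \<Rightarrow> real"
  assumes m: "g \<in> borel_measurable borel" and b: "\<And>s y. (s,y) \<in> rect t \<Longrightarrow> \<bar>g (s,y)\<bar> \<le> M"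
    and M: "0 \<le> M" and t: "0 \<le> t"
  shows "integrable lborel (Ig t x g)"
proof (rule integrableI_bounded[OF Ig_meas[OF m]])
  have "(\<integral>\<^sup>+s. ennreal (norm (Ig t x g s)) \<partial>lborel)
       \<le> (\<integral>\<^sup>+s. ennreal (indicator {0..<t} s * (cK (t - s) * (M * exp (0 * s)))) \<partial>lborel)"
    by (intro nn_integral_mono ennreal_leI) (use Ig_bound(1)[OF m b] M in auto)
  also have "\<dots> \<le> ennreal (M * exp (0 * t) * kap 0)"
    by (rule nn_kernelB[OF t _ M]) simp
  finally show "(\<integral>\<^sup>+s. ennreal (norm (Ig t x g s)) \<partial>lborel) < \<infinity>"
    by (simp add: le_less_trans)
qed

lemma rect_closed: "closed (rect t)" unfolding rect_def by (intro closed_Times closed_atLeastAtMost)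
lemma rect_compact: "compact (rect t)" unfolding rect_def by (intro compact_Times compact_Icc)
lemma rect_borel: "rect t \<in> sets borel" using rect_closed by (rule borel_closed)

lemma restr_meas:
  fixes h :: "real \<times> real \<Rightarrow> real"
  assumes "continuous_on (rect t) h"
  shows "(\<lambda>p. indicator (rect t) p * h p) \<in> borel_measurable borel"
  using borel_measurable_continuous_on_indicator[OF rect_borel assms] by simp

lemma heat_conv_Ig:
  fixes h :: "real \<times> real \<Rightarrow> real"
  assumes c: "continuous_on (rect t) h"
  shows "heat_conv h (t,x) = integral\<^sup>L lborel (Ig t x (\<lambda>p. indicator (rect t) p * h p))"
proof -
  define g where "g = (\<lambda>p. indicator (rect t) p * h p)"
  have gm[measurable]: "g \<in> borel_measurable borel" unfolding g_def by (rule restr_meas[OF c])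
  have Im[measurable]: "Ig t x g \<in> borel_measurable lborel" by (rule Ig_meas[OF gm])
  define F where "F s = indicator {0..t} s * (\<integral>y. indicator {0..1} y * (heatG (t - s) x y * h (s,y)) \<partial>lborel)" for s
  have hc: "heat_conv h (t,x) = integral\<^sup>L lborel F"
    unfolding heat_conv_def set_lebesgue_integral_def F_def by simp
  have Fe: "F s = Ig t x g s" if "s \<noteq> t" for s
  proof (cases "s \<in> {0..<t}")
    case True
    hence "F s = (\<integral>y. indicator {0..1} y * (heatG (t - s) x y * h (s,y)) \<partial>lborel)" by (simp add: F_def)
    also have "\<dots> = Ig t x g s" unfolding Ig_def
      by (intro Bochner_Integration.integral_cong refl) (use True in \<open>auto simp: g_def rect_def indicator_def\<close>)
    finally show ?thesis .
  next
    case False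
    hence "s \<notin> {0..t}" using that by auto
    thus ?thesis using False by (simp add: F_def Ig_def)
  qed
  have "F = (\<lambda>s. if s = t then F t else Ig t x g s)" using Fe by auto
  moreover have "(\<lambda>s. if s = t then F t else Ig t x g s) \<in> borel_measurable lborel" by measurable
  ultimately have Fm: "F \<in> borel_measurable lborel" by simp
  have "integral\<^sup>L lborel F = integral\<^sup>L lborel (Ig t x g)"
    by (rule integral_cong_AE[OF Fm Im]) (use AE_lborel_singleton[of t] Fe in \<open>auto elim!: AE_mp\<close>)
  thus ?thesis using hc g_def by simp
qed

lemma cont_bound:
  fixes h :: "real \<times> real \<Rightarrow> real"
  assumes "continuous_on (rect t) h"
  obtains M where "M > 0" "\<And>p. p \<in> rect t \<Longrightarrow> \<bar>h p\<bar> \<le> M"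
proof -
  have "bounded (h ` rect t)" by (rule compact_imp_bounded[OF compact_continuous_image[OF assms rect_compact]])
  then obtain M where "M > 0" "\<forall>v\<in>h ` rect t. norm v \<le> M" by (auto simp: bounded_pos)
  thus ?thesis using that by auto
qed

lemma conv_est:
  fixes h1 h2 :: "real \<times> real \<Rightarrow> real"
  assumes t: "0 \<le> t" and l: "0 \<le> l" and B: "0 \<le> B"
    and c1: "continuous_on (rect t) h1" and c2: "continuous_on (rect t) h2"
    and bd: "\<And>s y. (s,y) \<in> rect t \<Longrightarrow> \<bar>h1 (s,y) - h2 (s,y)\<bar> \<le> B * exp (l * s)"
  shows "\<bar>heat_conv h1 (t,x) - heat_conv h2 (t,x)\<bar> \<le> B * exp (l * t) * kap l"
proof -
  define g1 where "g1 = (\<lambda>p. indicator (rect t) p * h1 p)"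
  define g2 where "g2 = (\<lambda>p. indicator (rect t) p * h2 p)"
  have m1: "g1 \<in> borel_measurable borel" unfolding g1_def by (rule restr_meas[OF c1])
  have m2: "g2 \<in> borel_measurable borel" unfolding g2_def by (rule restr_meas[OF c2])
  obtain M1 where M1: "M1 > 0" "\<And>p. p \<in> rect t \<Longrightarrow> \<bar>h1 p\<bar> \<le> M1" using cont_bound[OF c1] by blast
  obtain M2 where M2: "M2 > 0" "\<And>p. p \<in> rect t \<Longrightarrow> \<bar>h2 p\<bar> \<le> M2" using cont_bound[OF c2] by blast
  have b1: "\<bar>g1 (s,y)\<bar> \<le> M1" if "(s,y) \<in> rect t" for s y using M1 that by (simp add: g1_def)
  have b2: "\<bar>g2 (s,y)\<bar> \<le> M2" if "(s,y) \<in> rect t" for s y using M2 that by (simp add: g2_def)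
  have i1: "integrable lborel (Ig t x g1)" by (rule Ig_integrable[OF m1 b1 _ t]) (use M1 in auto)
  have i2: "integrable lborel (Ig t x g2)" by (rule Ig_integrable[OF m2 b2 _ t]) (use M2 in auto)
  have "heat_conv h1 (t,x) - heat_conv h2 (t,x) = integral\<^sup>L lborel (\<lambda>s. Ig t x g1 s - Ig t x g2 s)"
    unfolding heat_conv_Ig[OF c1] heat_conv_Ig[OF c2] g1_def[symmetric] g2_def[symmetric]
    by (rule Bochner_Integration.integral_diff[OF i1 i2, symmetric])
  also have "\<dots> = integral\<^sup>L lborel (Ig t x (\<lambda>p. g1 p - g2 p))"
    by (intro Bochner_Integration.integral_cong refl Ig_diff[OF m1 m2 b1 b2]) (use M1 M2 in auto)
  finally have eq: "heat_conv h1 (t,x) - heat_conv h2 (t,x) = integral\<^sup>L lborel (Ig t x (\<lambda>p. g1 p - g2 p))" .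
  have m12: "(\<lambda>p. g1 p - g2 p) \<in> borel_measurable borel" using m1 m2 by measurable
  have b12: "\<bar>g1 (s,y) - g2 (s,y)\<bar> \<le> B * exp (l * s)" if "(s,y) \<in> rect t" for s y
    using bd[OF that] that by (simp add: g1_def g2_def)
  have "(\<integral>\<^sup>+s. ennreal \<bar>Ig t x (\<lambda>p. g1 p - g2 p) s\<bar> \<partial>lborel)
      \<le> (\<integral>\<^sup>+s. ennreal (indicator {0..<t} s * (cK (t - s) * (B * exp (l * s)))) \<partial>lborel)"
    by (intro nn_integral_mono ennreal_leI Ig_bound(1)[OF m12 b12]) (use B in auto)
  also have "\<dots> \<le> ennreal (B * exp (l * t) * kap l)" by (rule nn_kernelB[OF t l B])
  finally have "\<bar>integral\<^sup>L lborel (Ig t x (\<lambda>p. g1 p - g2 p))\<bar> \<le> B * exp (l * t) * kap l"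
    by (rule abs_integral_le_nn) (use B kap_nonneg[OF l] in auto)
  thus ?thesis using eq by simp
qed

definition sol :: "real \<Rightarrow> (real \<Rightarrow> real) \<Rightarrow> (real \<Rightarrow> real) \<Rightarrow> (real \<times> real \<Rightarrow> real) \<Rightarrow> (real \<times> real \<Rightarrow> real) \<Rightarrow> bool" where
  "sol T u0 b f v \<longleftrightarrow> continuous_on (rect T) v \<and>
     (\<forall>t x. (t, x) \<in> rect T \<longrightarrow> v (t, x) = heat_sg u0 t x + heat_conv (\<lambda>p. b (v p)) (t, x) + f (t, x))"

lemma rect_mono: "t \<le> T \<Longrightarrow> rect t \<subseteq> rect T" unfolding rect_def by auto

lemma comp_cont:
  assumes L: "L-lipschitz_on UNIV b" and c: "continuous_on (rect T) v" and "t \<le> T"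
  shows "continuous_on (rect t) (\<lambda>p. b (v p))"
proof -
  have "continuous_on UNIV b" by (rule lipschitz_on_continuous_on[OF L])
  hence "continuous_on (rect T) (\<lambda>p. b (v p))"
    using continuous_on_compose2[OF _ c, of UNIV b] by auto
  thus ?thesis using continuous_on_subset rect_mono[OF assms(3)] by blast
qed

definition Kc :: "real \<Rightarrow> real \<Rightarrow> real" where
  "Kc L T = 2 * exp ((8 * L + 1)\<^sup>2 * T)"

lemma Kc_pos: "0 < Kc L T" by (simp add: Kc_def)

lemma conv_lip:
  assumes L: "L-lipschitz_on UNIV b" and cv: "continuous_on (rect T) v" and cw: "continuous_on (rect T) w"
    and p: "(t,x) \<in> rect T" and l: "0 \<le> l" and D: "0 \<le> D"
    and bd: "\<And>s y. (s,y) \<in> rect T \<Longrightarrow> \<bar>v (s,y) - w (s,y)\<bar> \<le> D * exp (l * s)"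
  shows "\<bar>heat_conv (\<lambda>p. b (v p)) (t,x) - heat_conv (\<lambda>p. b (w p)) (t,x)\<bar> \<le> L * D * exp (l * t) * kap l"
proof -
  have t: "0 \<le> t" "t \<le> T" using p by (auto simp: rect_def)
  have L0: "0 \<le> L" by (rule lipschitz_on_nonneg[OF L])
  show ?thesis
  proof (rule conv_est[OF t(1) l _ comp_cont[OF L cv t(2)] comp_cont[OF L cw t(2)]])
    show "0 \<le> L * D" using L0 D by simp
    fix s y assume sy: "(s,y) \<in> rect t"
    hence sy': "(s,y) \<in> rect T" using rect_mono[OF t(2)] by auto
    have "\<bar>b (v (s,y)) - b (w (s,y))\<bar> \<le> L * \<bar>v (s,y) - w (s,y)\<bar>"
      using lipschitz_onD[OF L, of "v (s,y)" "w (s,y)"] by (simp add: dist_real_def)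
    also have "\<dots> \<le> L * (D * exp (l * s))" by (intro mult_left_mono bd[OF sy'] L0)
    finally show "\<bar>b (v (s,y)) - b (w (s,y))\<bar> \<le> L * D * exp (l * s)" by (simp add: mult_ac)
  qed
qed

lemma sol_lip:
  assumes L: "L-lipschitz_on UNIV b" and T: "0 \<le> T"
    and sv: "sol T u0 b f v" and sw: "sol T u0 b g w"
    and fg: "\<And>p. p \<in> rect T \<Longrightarrow> \<bar>f p - g p\<bar> \<le> \<delta>"
    and p: "p \<in> rect T"
  shows "\<bar>v p - w p\<bar> \<le> Kc L T * \<delta>"
proof -
  have L0: "0 \<le> L" by (rule lipschitz_on_nonneg[OF L])
  define m where "m = 8 * L + 1"
  define l where "l = m\<^sup>2"
  have m0: "m > 0" using L0 by (simp add: m_def)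
  have l0: "0 \<le> l" by (simp add: l_def)
  have Lk: "L * kap l \<le> 1 / 2"
  proof -
    have "L * kap l \<le> L * (4 / m)" unfolding l_def by (intro mult_left_mono kap_bound m0 L0)
    also have "\<dots> \<le> 1 / 2" using m0 L0 by (simp add: m_def field_simps)
    finally show ?thesis .
  qed
  have cv: "continuous_on (rect T) v" and cw: "continuous_on (rect T) w" using sv sw by (auto simp: sol_def)
  define q where "q p = \<bar>v p - w p\<bar> * exp (- l * fst p)" for p
  have cq: "continuous_on (rect T) q" unfolding q_def by (intro continuous_intros cv cw)
  have bddq: "bdd_above (q ` rect T)"
    by (rule bounded_imp_bdd_above[OF compact_imp_bounded[OF compact_continuous_image[OF cq rect_compact]]])
  have ne: "rect T \<noteq> {}" using T by (auto simp: rect_def)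
  define D where "D = Sup (q ` rect T)"
  have qD: "q p' \<le> D" if "p' \<in> rect T" for p' unfolding D_def by (rule cSup_upper[OF _ bddq]) (use that in auto)
  have D0: "0 \<le> D" using qD[of "(0,0)"] T by (auto simp: q_def rect_def)
  have bd: "\<bar>v (s,y) - w (s,y)\<bar> \<le> D * exp (l * s)" if "(s,y) \<in> rect T" for s y
  proof -
    have "\<bar>v (s,y) - w (s,y)\<bar> = q (s,y) * exp (l * s)" by (simp add: q_def mult.assoc exp_minus field_simps)
    also have "\<dots> \<le> D * exp (l * s)" by (intro mult_right_mono qD that) simp
    finally show ?thesis .
  qed
  have key: "q p' \<le> \<delta> + D / 2" if p': "p' \<in> rect T" for p'
  proof -
    obtain t x where tx: "p' = (t,x)" by (cases p')
    have t0: "0 \<le> t" using p' tx by (auto simp: rect_def)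
    have ev: "v (t,x) - w (t,x) = (f (t,x) - g (t,x)) + (heat_conv (\<lambda>p. b (v p)) (t,x) - heat_conv (\<lambda>p. b (w p)) (t,x))"
      using sv sw p' tx by (auto simp: sol_def)
    have "\<bar>v (t,x) - w (t,x)\<bar> \<le> \<delta> + L * D * exp (l * t) * kap l"
      unfolding ev using fg[of "(t,x)"] conv_lip[OF L cv cw p'[unfolded tx] l0 D0 bd] p' tx
      by (smt (verit))
    hence "q (t,x) \<le> (\<delta> + L * D * exp (l * t) * kap l) * exp (- l * t)"
      unfolding q_def fst_conv by (rule mult_right_mono) auto
    also have "\<dots> = \<delta> * exp (- l * t) + (L * kap l) * D"
      by (simp add: algebra_simps exp_minus field_simps)
    also have "\<dots> \<le> \<delta> + D / 2"
    proof -
      have d0: "0 \<le> \<delta>" using fg[of "(0,0)"] T by (auto simp: rect_def)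
      have "\<delta> * exp (- l * t) \<le> \<delta> * 1" using d0 l0 t0 by (intro mult_left_mono) auto
      moreover have "(L * kap l) * D \<le> (1/2) * D" by (intro mult_right_mono Lk D0)
      ultimately show ?thesis by simp
    qed
    finally show ?thesis using tx by simp
  qed
  have "Sup (q ` rect T) \<le> \<delta> + D / 2" by (rule cSup_least) (use ne key in auto)
  hence "D \<le> \<delta> + D / 2" unfolding D_def .
  hence D2: "D \<le> 2 * \<delta>" by simp
  obtain t x where tx: "p = (t,x)" by (cases p)
  have tT: "t \<le> T" using p tx by (auto simp: rect_def)
  have "\<bar>v p - w p\<bar> \<le> D * exp (l * t)" using bd p tx by simp
  also have "\<dots> \<le> 2 * \<delta> * exp (l * T)" using D2 D0 tT l0 by (intro mult_mono) (auto simp: mult_left_mono)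
  also have "\<dots> = Kc L T * \<delta>" by (simp add: Kc_def l_def m_def)
  finally show ?thesis .
qed

definition cl :: "real \<Rightarrow> real \<times> real \<Rightarrow> real \<times> real" where
  "cl T p = (max 0 (min T (fst p)), max 0 (min 1 (snd p)))"

lemma cl_in: "0 \<le> T \<Longrightarrow> cl T p \<in> rect T" by (auto simp: cl_def rect_def)
lemma cl_id: "p \<in> rect T \<Longrightarrow> cl T p = p" by (cases p) (auto simp: cl_def rect_def)
lemma cl_cont: "continuous_on UNIV (cl T)" unfolding cl_def by (intro continuous_intros)

definition toB :: "real \<Rightarrow> (real \<times> real \<Rightarrow> real) \<Rightarrow> (real \<times> real) \<Rightarrow>\<^sub>C real" where
  "toB T f = Bcontfun (\<lambda>p. f (cl T p))"

lemma toB_apply: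
  assumes T: "0 \<le> T" and c: "continuous_on (rect T) f"
  shows "apply_bcontfun (toB T f) = (\<lambda>p. f (cl T p))"
proof -
  have "(\<lambda>p. f (cl T p)) \<in> bcontfun"
    unfolding bcontfun_def
  proof safe
    show "continuous_on UNIV (\<lambda>p. f (cl T p))"
      by (rule continuous_on_compose2[OF c cl_cont]) (use cl_in[OF T] in auto)
    have "range (\<lambda>p. f (cl T p)) \<subseteq> f ` rect T" using cl_in[OF T] by auto
    moreover have "bounded (f ` rect T)" by (rule compact_imp_bounded[OF compact_continuous_image[OF c rect_compact]])
    ultimately show "bounded (range (\<lambda>p. f (cl T p)))" by (rule bounded_subset[rotated])
  qed
  thus ?thesis unfolding toB_def by (simp add: Bcontfun_inverse)
qed

lemma toB_rect: "0 \<le> T \<Longrightarrow> continuous_on (rect T) f \<Longrightarrow> p \<in> rect T \<Longrightarrow> apply_bcontfun (toB T f) p = f p"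
  by (simp add: toB_apply cl_id)

lemma toB_dist:
  assumes T: "0 \<le> T" and cf: "continuous_on (rect T) f" and cg: "continuous_on (rect T) g"
    and b: "\<And>p. p \<in> rect T \<Longrightarrow> \<bar>f p - g p\<bar> \<le> d"
  shows "dist (toB T f) (toB T g) \<le> d"
  by (rule dist_bound) (use b cl_in[OF T] in \<open>auto simp: toB_apply[OF T cf] toB_apply[OF T cg] dist_real_def\<close>)

lemma sol_cong: "(\<And>p. p \<in> rect T \<Longrightarrow> f p = g p) \<Longrightarrow> sol T u0 b f v \<Longrightarrow> sol T u0 b g v"
  unfolding sol_def by auto

lemma sol_unique:
  assumes L: "L-lipschitz_on UNIV b" and T: "0 \<le> T"
    and "sol T u0 b f v" "sol T u0 b g w" "\<And>p. p \<in> rect T \<Longrightarrow> f p = g p" "p \<in> rect T"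
  shows "v p = w p"
  using sol_lip[OF L T assms(3,4), of 0 p] assms(5,6) by simp

lemma bc_dist_pt: "\<bar>apply_bcontfun f p - apply_bcontfun g p\<bar> \<le> dist f g"
  for f g :: "(real \<times> real) \<Rightarrow>\<^sub>C real"
  using dist_bounded[of f p g] by (simp add: dist_real_def)

lemma bc_tendsto_pt:
  fixes f :: "nat \<Rightarrow> (real \<times> real) \<Rightarrow>\<^sub>C real"
  assumes "f \<longlonglongrightarrow> g" shows "(\<lambda>k. apply_bcontfun (f k) p) \<longlonglongrightarrow> apply_bcontfun g p"
proof -
  have "(\<lambda>k. dist (f k) g) \<longlonglongrightarrow> 0" using tendsto_dist_iff[THEN iffD1, OF assms] .
  have "(\<lambda>k. apply_bcontfun (f k) p - apply_bcontfun g p) \<longlonglongrightarrow> 0"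
    by (rule Lim_null_comparison[OF always_eventually \<open>(\<lambda>k. dist (f k) g) \<longlonglongrightarrow> 0\<close>])
       (simp add: bc_dist_pt)
  thus ?thesis by (rule LIM_zero_cancel)
qed

lemma DB_closed:
  assumes L: "L-lipschitz_on UNIV b" and T: "0 \<le> T"
  shows "closed {\<phi> :: (real \<times> real) \<Rightarrow>\<^sub>C real. \<exists>v. sol T u0 b (apply_bcontfun \<phi>) v}"
  unfolding closed_sequential_limits
proof safe
  fix \<phi> :: "nat \<Rightarrow> (real \<times> real) \<Rightarrow>\<^sub>C real" and \<phi>0
  assume mem: "\<forall>n. \<phi> n \<in> {\<phi>. \<exists>v. sol T u0 b (apply_bcontfun \<phi>) v}" and lim: "\<phi> \<longlonglongrightarrow> \<phi>0"
  define v where "v n = (SOME v. sol T u0 b (apply_bcontfun (\<phi> n)) v)" for n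
  have sv: "sol T u0 b (apply_bcontfun (\<phi> n)) (v n)" for n
  proof -
    have "\<exists>v. sol T u0 b (apply_bcontfun (\<phi> n)) v" using mem by blast
    thus ?thesis unfolding v_def by (rule someI_ex)
  qed
  have cv: "continuous_on (rect T) (v n)" for n using sv by (simp add: sol_def)
  define \<psi> where "\<psi> n = toB T (v n)" for n
  have Kc0: "0 < Kc L T" by (rule Kc_pos)
  have dpsi: "dist (\<psi> j) (\<psi> k) \<le> Kc L T * dist (\<phi> j) (\<phi> k)" for j k
    unfolding \<psi>_def
  proof (rule toB_dist[OF T cv cv])
    fix p assume p: "p \<in> rect T"
    show "\<bar>v j p - v k p\<bar> \<le> Kc L T * dist (\<phi> j) (\<phi> k)"
      by (rule sol_lip[OF L T sv sv _ p]) (rule bc_dist_pt)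
  qed
  have "Cauchy \<phi>" using lim by (rule LIMSEQ_imp_Cauchy)
  have "Cauchy \<psi>"
  proof (rule metric_CauchyI)
    fix e :: real assume e: "e > 0"
    then obtain M where M: "\<forall>m\<ge>M. \<forall>n\<ge>M. dist (\<phi> m) (\<phi> n) < e / Kc L T"
      using \<open>Cauchy \<phi>\<close>[unfolded Cauchy_def] Kc0 by (meson divide_pos_pos)
    show "\<exists>M. \<forall>m\<ge>M. \<forall>n\<ge>M. dist (\<psi> m) (\<psi> n) < e"
    proof (intro exI allI impI)
      fix m n assume "M \<le> m" "M \<le> n"
      hence "dist (\<phi> m) (\<phi> n) < e / Kc L T" using M by auto
      hence "Kc L T * dist (\<phi> m) (\<phi> n) < e" using Kc0 by (simp add: field_simps)
      thus "dist (\<psi> m) (\<psi> n) < e" using dpsi[of m n] by simp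
    qed
  qed
  then obtain \<psi>0 where psi0: "\<psi> \<longlonglongrightarrow> \<psi>0" using Cauchy_convergent_iff convergent_def by blast
  define w where "w = apply_bcontfun \<psi>0"
  have cw: "continuous_on (rect T) w" unfolding w_def by simp
  have psi_rect: "apply_bcontfun (\<psi> n) p = v n p" if "p \<in> rect T" for n p
    unfolding \<psi>_def using toB_rect[OF T cv that] .
  have "sol T u0 b (apply_bcontfun \<phi>0) w"
    unfolding sol_def
  proof (intro conjI cw allI impI)
    fix t x assume tx: "(t,x) \<in> rect T"
    have vlim: "(\<lambda>n. v n (t,x)) \<longlonglongrightarrow> w (t,x)"
      using bc_tendsto_pt[OF psi0, of "(t,x)"] psi_rect[OF tx] unfolding w_def by simp
    have plim: "(\<lambda>n. apply_bcontfun (\<phi> n) (t,x)) \<longlonglongrightarrow> apply_bcontfun \<phi>0 (t,x)"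
      by (rule bc_tendsto_pt[OF lim])
    have clim: "(\<lambda>n. heat_conv (\<lambda>p. b (v n p)) (t,x)) \<longlonglongrightarrow> heat_conv (\<lambda>p. b (w p)) (t,x)"
    proof -
      have d0: "(\<lambda>n. dist (\<psi> n) \<psi>0) \<longlonglongrightarrow> 0" using tendsto_dist_iff[THEN iffD1, OF psi0] .
      have z: "(\<lambda>n. L * dist (\<psi> n) \<psi>0 * exp (0 * t) * kap 0) \<longlonglongrightarrow> 0"
      proof -
        have "(\<lambda>n. L * dist (\<psi> n) \<psi>0 * kap 0) \<longlonglongrightarrow> 0"
          by (intro tendsto_mult_right_zero tendsto_mult_left_zero d0)
        thus ?thesis by simp
      qed
      have bnd: "norm (heat_conv (\<lambda>p. b (v n p)) (t,x) - heat_conv (\<lambda>p. b (w p)) (t,x)) \<le> L * dist (\<psi> n) \<psi>0 * exp (0 * t) * kap 0" for n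
      proof -
        have bd: "\<bar>v n (s,y) - w (s,y)\<bar> \<le> dist (\<psi> n) \<psi>0 * exp (0 * s)" if sy: "(s,y) \<in> rect T" for s y
        proof -
          have "\<bar>apply_bcontfun (\<psi> n) (s,y) - apply_bcontfun \<psi>0 (s,y)\<bar> \<le> dist (\<psi> n) \<psi>0" by (rule bc_dist_pt)
          thus ?thesis using psi_rect[OF sy, of n] unfolding w_def by simp
        qed
        have "\<bar>heat_conv (\<lambda>p. b (v n p)) (t,x) - heat_conv (\<lambda>p. b (w p)) (t,x)\<bar> \<le> L * dist (\<psi> n) \<psi>0 * exp (0 * t) * kap 0"
          by (rule conv_lip[OF L cv cw tx _ _ bd]) simp_all
        thus ?thesis by simp
      qed
      have "(\<lambda>n. heat_conv (\<lambda>p. b (v n p)) (t,x) - heat_conv (\<lambda>p. b (w p)) (t,x)) \<longlonglongrightarrow> 0"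
        by (rule Lim_null_comparison[OF always_eventually z]) (rule allI, rule bnd)
      thus ?thesis by (rule LIM_zero_cancel)
    qed
    have eqn: "v n (t,x) = heat_sg u0 t x + heat_conv (\<lambda>p. b (v n p)) (t,x) + apply_bcontfun (\<phi> n) (t,x)" for n
      using sv[of n] tx by (simp add: sol_def)
    have "(\<lambda>n. v n (t,x)) \<longlonglongrightarrow> heat_sg u0 t x + heat_conv (\<lambda>p. b (w p)) (t,x) + apply_bcontfun \<phi>0 (t,x)"
      unfolding eqn by (intro tendsto_intros clim plim)
    thus "w (t,x) = heat_sg u0 t x + heat_conv (\<lambda>p. b (w p)) (t,x) + apply_bcontfun \<phi>0 (t,x)"
      using vlim LIMSEQ_unique by blast
  qed
  thus "\<exists>v. sol T u0 b (apply_bcontfun \<phi>0) v" by blast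
qed

lemma F_local:
  assumes Fb: "bdd_cont_functional T F" and cf: "continuous_on (rect T) f" and cg: "continuous_on (rect T) g"
    and eq: "\<And>p. p \<in> rect T \<Longrightarrow> f p = g p"
  shows "F f = F g"
proof (rule ccontr)
  assume ne: "F f \<noteq> F g"
  have all: "\<forall>\<epsilon>>0. \<exists>\<delta>>0. \<forall>h. continuous_on (rect T) h \<and> (\<forall>p\<in>rect T. \<bar>f p - h p\<bar> < \<delta>) \<longrightarrow> \<bar>F f - F h\<bar> < \<epsilon>"
    using Fb cf unfolding bdd_cont_functional_def by blast
  have pos: "\<bar>F f - F g\<bar> > 0" using ne by simp
  obtain \<delta> where "\<delta> > 0" and d: "\<And>h. continuous_on (rect T) h \<Longrightarrow> (\<forall>p\<in>rect T. \<bar>f p - h p\<bar> < \<delta>) \<Longrightarrow> \<bar>F f - F h\<bar> < \<bar>F f - F g\<bar>"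
    using all[rule_format, OF pos] by blast
  have "\<bar>F f - F g\<bar> < \<bar>F f - F g\<bar>" by (rule d[OF cg]) (use eq \<open>\<delta> > 0\<close> in auto)
  thus False by simp
qed

lemma completion_meas_AE:
  fixes f g :: "'a \<Rightarrow> real"
  assumes ae: "AE x in M. f x = g x" and f: "f \<in> borel_measurable (completion M)"
  shows "g \<in> borel_measurable (completion M)"
proof (rule measurableI)
  fix A :: "real set" assume A: "A \<in> sets borel"
  have fA: "f -` A \<inter> space (completion M) \<in> sets (completion M)" using measurable_sets[OF f A] .
  show "g -` A \<inter> space (completion M) \<in> sets (completion M)"
  proof (rule completion.in_sets_AE[OF _ fA])
    show "AE x in completion M. (x \<in> f -` A \<inter> space (completion M)) = (x \<in> g -` A \<inter> space (completion M))"
      using AE_completion[OF ae] by (auto elim!: AE_mp)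
  qed auto
qed auto

lemma integral_completion_AE:
  fixes f g :: "'a \<Rightarrow> real"
  assumes ae: "AE x in M. f x = g x"
  shows "integral\<^sup>L (completion M) f = integral\<^sup>L (completion M) g"
proof (cases "f \<in> borel_measurable (completion M)")
  case True
  have g: "g \<in> borel_measurable (completion M)" by (rule completion_meas_AE[OF ae True])
  show ?thesis by (rule integral_cong_AE[OF True g AE_completion[OF ae]])
next
  case False
  have ae': "AE x in M. g x = f x" using ae by (auto elim: AE_mp)
  have g: "g \<notin> borel_measurable (completion M)" using completion_meas_AE[OF ae'] False by blast
  have "\<not> integrable (completion M) f" using False borel_measurable_integrable by blast
  moreover have "\<not> integrable (completion M) g" using g borel_measurable_integrable by blast
  ultimately show ?thesis by (simp add: not_integrable_integral_eq)
qed

theorem theorem3p5: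
  fixes T :: real
    and u0 :: "real \<Rightarrow> real" and b :: "real \<Rightarrow> real"
    and M :: "nat \<Rightarrow> 'a measure"
    and \<theta> :: "nat \<Rightarrow> 'a \<Rightarrow> real \<times> real \<Rightarrow> real"
    and Usol :: "nat \<Rightarrow> 'a \<Rightarrow> real \<times> real \<Rightarrow> real"
    and N :: "'b measure"
    and W X U :: "'b \<Rightarrow> real \<times> real \<Rightarrow> real"
  assumes T_pos: "T > 0"
    and u0_cont: "continuous_on {0..1} u0"
    and b_lip: "\<exists>L. L-lipschitz_on UNIV b"
    and M_prob: "\<And>n. prob_space (M n)"
    and \<theta>_meas: "\<And>n. (\<lambda>(\<omega>, p). \<theta> n \<omega> p) \<in> borel_measurable (M n \<Otimes>\<^sub>M lborel)"
    and \<theta>_L2: "\<And>n. AE \<omega> in M n.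
                   integrable lborel (\<lambda>p. indicator (rect T) p * (\<theta> n \<omega> p)\<^sup>2)"
    and N_prob: "prob_space N"
    and W_sheet: "brownian_sheet N T W"
    and X_wiener: "\<And>t x. (t, x) \<in> rect T \<Longrightarrow>
          wiener_integral N T W (\<lambda>(s, y). if s < t then heatG (t - s) x y else 0)
                          (\<lambda>\<omega>. X \<omega> (t, x))"
    and X_cont: "AE \<omega> in N. continuous_on (rect T) (X \<omega>)"
    and conv_X: "conv_in_law_C T M (\<lambda>n \<omega>. heat_conv (\<theta> n \<omega>)) N X"
    and Un_sol: "\<And>n. AE \<omega> in M n. continuous_on (rect T) (Usol n \<omega>) \<and>
          (\<forall>t x. (t, x) \<in> rect T \<longrightarrow>
             Usol n \<omega> (t, x) = heat_sg u0 t x + heat_conv (\<lambda>p. b (Usol n \<omega> p)) (t, x)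
                             + heat_conv (\<theta> n \<omega>) (t, x))"
    and U_adapted: "adapted_to N T W U"
    and U_sol: "AE \<omega> in N. continuous_on (rect T) (U \<omega>) \<and>
          (\<forall>t x. (t, x) \<in> rect T \<longrightarrow>
             U \<omega> (t, x) = heat_sg u0 t x + heat_conv (\<lambda>p. b (U \<omega> p)) (t, x) + X \<omega> (t, x))"
  shows "conv_in_law_C T M Usol N U"
proof -
  obtain L where L: "L-lipschitz_on UNIV b" using b_lip by blast
  have T0: "0 \<le> T" using T_pos by simp
  show ?thesis unfolding conv_in_law_C_def
  proof (intro allI impI)
    fix F :: "(real \<times> real \<Rightarrow> real) \<Rightarrow> real"
    assume Fb: "bdd_cont_functional T F"
    obtain C where C: "\<And>f. continuous_on (rect T) f \<Longrightarrow> \<bar>F f\<bar> \<le> C"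
      using Fb unfolding bdd_cont_functional_def by blast
    have Fc: "\<And>f \<epsilon>. continuous_on (rect T) f \<Longrightarrow> \<epsilon> > 0 \<Longrightarrow> \<exists>\<delta>>0. \<forall>g. continuous_on (rect T) g \<and> (\<forall>p\<in>rect T. \<bar>f p - g p\<bar> < \<delta>)
              \<longrightarrow> \<bar>F f - F g\<bar> < \<epsilon>"
      using Fb unfolding bdd_cont_functional_def by blast
    have C0: "0 \<le> C"
    proof -
      have "\<bar>F (\<lambda>_. 0)\<bar> \<le> C" by (rule C) (rule continuous_on_const)
      thus ?thesis by simp
    qed
    define DB where "DB = {\<phi> :: (real \<times> real) \<Rightarrow>\<^sub>C real. \<exists>v. sol T u0 b (apply_bcontfun \<phi>) v}"
    define sv where "sv \<phi> = (SOME v. sol T u0 b (apply_bcontfun \<phi>) v)" for \<phi>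
    define Psi where "Psi \<phi> = F (sv \<phi>)" for \<phi>
    have solsv: "sol T u0 b (apply_bcontfun \<phi>) (sv \<phi>)" if "\<phi> \<in> DB" for \<phi>
    proof -
      have "\<exists>v. sol T u0 b (apply_bcontfun \<phi>) v" using that by (simp add: DB_def)
      thus ?thesis unfolding sv_def by (rule someI_ex)
    qed
    have csv: "continuous_on (rect T) (sv \<phi>)" if "\<phi> \<in> DB" for \<phi> using solsv[OF that] by (simp add: sol_def)
    have Psi_cont: "continuous_on DB Psi"
      unfolding continuous_on_iff
    proof (intro ballI allI impI)
      fix \<phi> e assume \<phi>: "\<phi> \<in> DB" and e: "(0::real) < e"
      obtain \<delta> where \<delta>: "\<delta> > 0" and d: "\<forall>g. continuous_on (rect T) g \<and> (\<forall>p\<in>rect T. \<bar>sv \<phi> p - g p\<bar> < \<delta>)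
              \<longrightarrow> \<bar>F (sv \<phi>) - F g\<bar> < e"
        using Fc[OF csv[OF \<phi>] e] by blast
      show "\<exists>d>0. \<forall>\<phi>'\<in>DB. dist \<phi>' \<phi> < d \<longrightarrow> dist (Psi \<phi>') (Psi \<phi>) < e"
      proof (intro exI conjI ballI impI)
        show "0 < \<delta> / Kc L T" using \<delta> Kc_pos by simp
        fix \<phi>' assume \<phi>': "\<phi>' \<in> DB" and dd: "dist \<phi>' \<phi> < \<delta> / Kc L T"
        have "\<forall>p\<in>rect T. \<bar>sv \<phi> p - sv \<phi>' p\<bar> < \<delta>"
        proof
          fix p assume p: "p \<in> rect T"
          have "\<bar>sv \<phi> p - sv \<phi>' p\<bar> \<le> Kc L T * dist \<phi> \<phi>'"
            by (rule sol_lip[OF L T0 solsv[OF \<phi>] solsv[OF \<phi>'] _ p]) (rule bc_dist_pt)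
          also have "\<dots> < \<delta>" using dd Kc_pos[of L T] by (simp add: dist_commute field_simps)
          finally show "\<bar>sv \<phi> p - sv \<phi>' p\<bar> < \<delta>" .
        qed
        hence "\<bar>F (sv \<phi>) - F (sv \<phi>')\<bar> < e" using d csv[OF \<phi>'] by blast
        thus "dist (Psi \<phi>') (Psi \<phi>) < e" by (simp add: Psi_def dist_real_def abs_minus_commute)
      qed
    qed
    have Psi_bd: "Psi ` DB \<subseteq> {-C..C}" using C csv unfolding Psi_def by (force simp: abs_le_iff)
    obtain Psi' where Pc: "continuous_map euclidean euclideanreal Psi'"
      and Pe: "\<And>\<phi>. \<phi> \<in> DB \<Longrightarrow> Psi' \<phi> = Psi \<phi>" and Pb: "Psi' ` topspace euclidean \<subseteq> {-C..C}"
    proof (rule Tietze_extension_closed_real_interval[of euclidean DB Psi "-C" C])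
      show "normal_space (euclidean :: ((real \<times> real) \<Rightarrow>\<^sub>C real) topology)"
        by (rule metrizable_imp_normal_space[OF metrizable_space_euclidean])
      show "closedin euclidean DB" unfolding DB_def closed_closedin[symmetric] by (rule DB_closed[OF L T0])
      show "continuous_map (subtopology euclidean DB) euclideanreal Psi" using Psi_cont by simp
    qed (use Psi_bd C0 in auto)
    have Pcont: "continuous_on UNIV Psi'" using Pc by simp
    define H where "H f = (if continuous_on (rect T) f then Psi' (toB T f) else F (SOME v. sol T u0 b f v))" for f
    have Hb: "bdd_cont_functional T H"
      unfolding bdd_cont_functional_def
    proof (rule conjI)
      show "\<exists>C'. \<forall>f. continuous_on (rect T) f \<longrightarrow> \<bar>H f\<bar> \<le> C'"
      proof (intro exI allI impI)
      fix f :: "real \<times> real \<Rightarrow> real" assume "continuous_on (rect T) f"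
      moreover have "Psi' (toB T f) \<in> {-C..C}" using Pb by (simp add: image_subset_iff)
      ultimately show "\<bar>H f\<bar> \<le> C" by (simp add: H_def abs_le_iff)
      qed
    next
      show "\<forall>f. continuous_on (rect T) f \<longrightarrow>
        (\<forall>\<epsilon>>0. \<exists>\<delta>>0. \<forall>g. continuous_on (rect T) g \<and> (\<forall>p\<in>rect T. \<bar>f p - g p\<bar> < \<delta>) \<longrightarrow> \<bar>H f - H g\<bar> < \<epsilon>)"
      proof (intro allI impI)
      fix f :: "real \<times> real \<Rightarrow> real" and \<epsilon> :: real
      assume cf: "continuous_on (rect T) f" and e: "\<epsilon> > 0"
      obtain d where d: "d > 0" and dd: "\<forall>y\<in>UNIV. dist y (toB T f) < d \<longrightarrow> dist (Psi' y) (Psi' (toB T f)) < \<epsilon>"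
        using Pcont[unfolded continuous_on_iff] e by blast
      show "\<exists>\<delta>>0. \<forall>g. continuous_on (rect T) g \<and> (\<forall>p\<in>rect T. \<bar>f p - g p\<bar> < \<delta>) \<longrightarrow> \<bar>H f - H g\<bar> < \<epsilon>"
      proof (intro exI conjI allI impI)
        show "0 < d / 2" using d by simp
        fix g assume g: "continuous_on (rect T) g \<and> (\<forall>p\<in>rect T. \<bar>f p - g p\<bar> < d / 2)"
        have "dist (toB T g) (toB T f) \<le> d / 2"
          by (rule toB_dist[OF T0]) (use g cf in \<open>auto simp: abs_minus_commute less_imp_le\<close>)
        hence "dist (Psi' (toB T g)) (Psi' (toB T f)) < \<epsilon>" using dd d by simp
        thus "\<bar>H f - H g\<bar> < \<epsilon>" using g cf by (simp add: H_def dist_real_def abs_minus_commute)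
      qed
      qed
    qed
    have Heq: "H f = F u" if su: "sol T u0 b f u" for f u
    proof -
      have cu: "continuous_on (rect T) u" using su by (simp add: sol_def)
      show ?thesis
      proof (cases "continuous_on (rect T) f")
        case True
        have DBm: "toB T f \<in> DB" unfolding DB_def
          using sol_cong[OF _ su, of "apply_bcontfun (toB T f)"] toB_rect[OF T0 True] by auto
        have "H f = F (sv (toB T f))" using True Pe[OF DBm] by (simp add: H_def Psi_def)
        also have "\<dots> = F u"
        proof (rule F_local[OF Fb csv[OF DBm] cu])
          fix p assume p: "p \<in> rect T"
          show "sv (toB T f) p = u p"
            by (rule sol_unique[OF L T0 solsv[OF DBm] su _ p]) (simp add: toB_rect[OF T0 True])
        qed
        finally show ?thesis .
      next
        case False
        have ex: "\<exists>v. sol T u0 b f v" using su by blast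
        have sS: "sol T u0 b f (SOME v. sol T u0 b f v)" using someI_ex[OF ex] .
        have "H f = F (SOME v. sol T u0 b f v)" using False by (simp add: H_def)
        also have "\<dots> = F u"
        proof (rule F_local[OF Fb _ cu])
          show "continuous_on (rect T) (SOME v. sol T u0 b f v)" using sS by (simp add: sol_def)
          fix p assume p: "p \<in> rect T"
          show "(SOME v. sol T u0 b f v) p = u p" by (rule sol_unique[OF L T0 sS su _ p]) simp
        qed
        finally show ?thesis .
      qed
    qed
    have eqM: "integral\<^sup>L (completion (M n)) (\<lambda>\<omega>. H (heat_conv (\<theta> n \<omega>)))
             = integral\<^sup>L (completion (M n)) (\<lambda>\<omega>. F (Usol n \<omega>))" for n
    proof (rule integral_completion_AE)
      show "AE \<omega> in M n. H (heat_conv (\<theta> n \<omega>)) = F (Usol n \<omega>)"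
        using Un_sol[of n] by (auto elim!: AE_mp intro!: Heq simp: sol_def)
    qed
    have eqN: "integral\<^sup>L (completion N) (\<lambda>\<omega>. H (X \<omega>)) = integral\<^sup>L (completion N) (\<lambda>\<omega>. F (U \<omega>))"
    proof (rule integral_completion_AE)
      show "AE \<omega> in N. H (X \<omega>) = F (U \<omega>)"
        using U_sol by (auto elim!: AE_mp intro!: Heq simp: sol_def)
    qed
    have "(\<lambda>n. integral\<^sup>L (completion (M n)) (\<lambda>\<omega>. H (heat_conv (\<theta> n \<omega>))))
          \<longlonglongrightarrow> integral\<^sup>L (completion N) (\<lambda>\<omega>. H (X \<omega>))"
      using conv_X Hb unfolding conv_in_law_C_def by blast
    thus "(\<lambda>n. integral\<^sup>L (completion (M n)) (\<lambda>\<omega>. F (Usol n \<omega>)))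
          \<longlonglongrightarrow> integral\<^sup>L (completion N) (\<lambda>\<omega>. F (U \<omega>))"
      unfolding eqM eqN .
  qed
qed

end
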